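(* Let $\mathcal{B}$ be a real Banach space having a pre-dual space $\mathcal{B}_*$, let $\nu_j\in\mathcal{B}_*$, $j\in\mathbb{N}_m$, be linearly independent, and let $\mathbf{y}\in\mathbb{R}^m\setminus\{0\}$. For $\mathbf{c}\in\mathbb{R}^m$ put $\mathcal{L}^*(\mathbf{c}):=\sum_{j\in\mathbb{N}_m}c_j\nu_j$, and let (D) denote the problem $\inf\{\|\mathcal{L}^*(\mathbf{c})\|_{\mathcal{B}_*}:\langle\mathbf{c},\mathbf{y}\rangle_{\mathbb{R}^m}=1,\ \mathbf{c}\in\mathbb{R}^m\}$. Then: (a) if $\hat f$ is a solution of the minimum norm interpolation problem with data $\mathbf{y}$, there exists a solution $\hat{\mathbf{c}}$ of (D) such that $$\hat f\in\frac{1}{\|\mathcal{L}^*(\hat{\mathbf{c}})\|_{\mathcal{B}_*}}\partial\|\cdot\|_{\mathcal{B}_*}(\mathcal{L}^*(\hat{\mathbf{c}}))\cap\mathcal{M}_{\mathbf{y}};$$ (b) conversely, if $\hat{\mathbf{c}}$ is a solution of (D) and $\hat f\in\mathcal{B}$ belongs to the set displayed in (a), then $\hat f$ is a solution of the minimum norm interpolation problem with data $\mathbf{y}$.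
   Context: $\mathcal{B}$ is a real Banach space with dual $\mathcal{B}^*$ and pairing $\langle\nu,f\rangle_{\mathcal{B}}:=\nu(f)$; $\mathbb{N}_m:=\{1,\dots,m\}$; $\mathcal{L}(f):=[\langle\nu_j,f\rangle_{\mathcal{B}}:j\in\mathbb{N}_m]$, $\mathcal{M}_{\mathbf{y}}:=\{f\in\mathcal{B}:\mathcal{L}(f)=\mathbf{y}\}$; a solution of the minimum norm interpolation problem with data $\mathbf{y}$ is an $\hat f\in\mathcal{M}_{\mathbf{y}}$ with $\|\hat f\|_{\mathcal{B}}=\inf\{\|f\|_{\mathcal{B}}:f\in\mathcal{M}_{\mathbf{y}}\}$. A normed space $\mathcal{B}_*$ is a pre-dual of $\mathcal{B}$ if $(\mathcal{B}_* )^*=\mathcal{B}$, with $\langle\nu,f\rangle_{\mathcal{B}}=f(\nu)$ for $\nu\in\mathcal{B}_*$. For a convex $\phi$ on a real normed space $X$, $\partial\phi(x):=\{\mu\in X^*:\phi(z)-\phi(x)\ge\mu(z-x)\ \forall z\in X\}$. *)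

theory Defs
  imports "HOL-Analysis.Analysis"
begin

(* The Banach space B with pre-dual 'p is modelled as the dual of 'p, i.e. the
  space of bounded linear functionals 'p \<Rightarrow>\<^sub>L real; the pairing of
  \<nu> in the pre-dual with f in B is  blinfun_apply f \<nu>.*)

definition subdiff :: "('p::real_normed_vector \<Rightarrow> real) \<Rightarrow> 'p \<Rightarrow> ('p \<Rightarrow>\<^sub>L real) set" where
  "subdiff \<phi> x = {\<mu>. \<forall>z. \<phi> z - \<phi> x \<ge> blinfun_apply \<mu> (z - x)}"

definition interp_set :: "nat \<Rightarrow> (nat \<Rightarrow> 'p::real_normed_vector) \<Rightarrow> (nat \<Rightarrow> real) \<Rightarrow> ('p \<Rightarrow>\<^sub>L real) set" where
  "interp_set m \<nu> y = {f. \<forall>j\<in>{1..m}. blinfun_apply f (\<nu> j) = y j}"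

definition is_mni_solution :: "nat \<Rightarrow> (nat \<Rightarrow> 'p::real_normed_vector) \<Rightarrow> (nat \<Rightarrow> real) \<Rightarrow> ('p \<Rightarrow>\<^sub>L real) \<Rightarrow> bool" where
  "is_mni_solution m \<nu> y f \<longleftrightarrow> f \<in> interp_set m \<nu> y \<and> norm f = Inf (norm ` interp_set m \<nu> y)"

definition adjL :: "nat \<Rightarrow> (nat \<Rightarrow> 'p::real_normed_vector) \<Rightarrow> (nat \<Rightarrow> real) \<Rightarrow> 'p" where
  "adjL m \<nu> c = (\<Sum>j\<in>{1..m}. c j *\<^sub>R \<nu> j)"

definition is_dual_solution :: "nat \<Rightarrow> (nat \<Rightarrow> 'p::real_normed_vector) \<Rightarrow> (nat \<Rightarrow> real) \<Rightarrow> (nat \<Rightarrow> real) \<Rightarrow> bool" where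
  "is_dual_solution m \<nu> y c \<longleftrightarrow>
     (\<Sum>j\<in>{1..m}. c j * y j) = 1 \<and>
     norm (adjL m \<nu> c) = Inf {norm (adjL m \<nu> c') | c'. (\<Sum>j\<in>{1..m}. c' j * y j) = 1}"

end

theory Submission
  imports Defs
begin
definition ext_graph :: "real \<Rightarrow> 'a::real_normed_vector set \<Rightarrow> ('a \<Rightarrow> real) \<Rightarrow> ('a \<times> real) set \<Rightarrow> bool" where
 "ext_graph N V \<phi> G \<longleftrightarrow> (\<forall>x a b. (x,a)\<in>G \<longrightarrow> (x,b)\<in>G \<longrightarrow> a=b) \<and> (0,0)\<in>G \<and>
   (\<forall>x a y b. (x,a)\<in>G \<longrightarrow> (y,b)\<in>G \<longrightarrow> (x+y,a+b)\<in>G) \<and>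
   (\<forall>x a r. (x,a)\<in>G \<longrightarrow> (r *\<^sub>R x, r*a)\<in>G) \<and>
   (\<forall>x a. (x,a)\<in>G \<longrightarrow> a \<le> N * norm x) \<and> (\<forall>x\<in>V. (x, \<phi> x)\<in>G)"

lemma egD:
  assumes "ext_graph N V \<phi> G"
  shows "\<And>x a b. (x,a)\<in>G \<Longrightarrow> (x,b)\<in>G \<Longrightarrow> a=b"
    and "(0,0)\<in>G"
    and "\<And>x a y b. (x,a)\<in>G \<Longrightarrow> (y,b)\<in>G \<Longrightarrow> (x+y,a+b)\<in>G"
    and "\<And>x a r. (x,a)\<in>G \<Longrightarrow> (r *\<^sub>R x, r*a)\<in>G"
    and "\<And>x a. (x,a)\<in>G \<Longrightarrow> a \<le> N * norm x"
    and "\<And>x. x\<in>V \<Longrightarrow> (x, \<phi> x)\<in>G"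
  using assms unfolding ext_graph_def by blast+

lemma ext_step:
  fixes G :: "('a::real_normed_vector \<times> real) set"
  assumes E: "ext_graph N V \<phi> G" and N: "N \<ge> 0" and x0: "x0 \<notin> fst ` G"
  shows "\<exists>G'. ext_graph N V \<phi> G' \<and> G \<subseteq> G' \<and> G' \<noteq> G"
proof -
  have fn1: "\<And>x a b. (x,a)\<in>G \<Longrightarrow> (x,b)\<in>G \<Longrightarrow> a=b"
    and z: "(0,0)\<in>G"
    and add: "\<And>x a y b. (x,a)\<in>G \<Longrightarrow> (y,b)\<in>G \<Longrightarrow> (x+y,a+b)\<in>G"
    and sc: "\<And>x a r. (x,a)\<in>G \<Longrightarrow> (r *\<^sub>R x, r*a)\<in>G"
    and bd: "\<And>x a. (x,a)\<in>G \<Longrightarrow> a \<le> N * norm x"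
    and V: "\<And>x. x\<in>V \<Longrightarrow> (x, \<phi> x)\<in>G"
    using egD[OF E] by blast+
  define S where "S = {a - N * norm (u - x0) | u a. (u,a)\<in>G}"
  define \<xi> where "\<xi> = Sup S"
  have key: "a - N * norm (u - x0) \<le> N * norm (v + x0) - b" if "(u,a)\<in>G" "(v,b)\<in>G" for u a v b
  proof -
    have "a + b \<le> N * norm (u + v)" using bd[OF add[OF that]] .
    also have "norm (u+v) \<le> norm (u - x0) + norm (v + x0)"
      using norm_triangle_ineq[of "u - x0" "v + x0"] by simp
    hence "N * norm (u + v) \<le> N * norm (u - x0) + N * norm (v + x0)"
      using N by (metis distrib_left mult_left_mono)
    finally show ?thesis by simp
  qed
  have Sne: "S \<noteq> {}" using z unfolding S_def by blast
  have Sbdd: "bdd_above S" unfolding S_def bdd_above_def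
    using key[OF _ z] by blast
  have lo: "a - N * norm (u - x0) \<le> \<xi>" if "(u,a)\<in>G" for u a
    unfolding \<xi>_def by (rule cSup_upper[OF _ Sbdd]) (use that S_def in blast)
  have hi: "\<xi> \<le> N * norm (v + x0) - b" if "(v,b)\<in>G" for v b
    unfolding \<xi>_def by (rule cSup_least[OF Sne]) (use key that S_def in blast)
  define G' where "G' = {(u + t *\<^sub>R x0, a + t * \<xi>) | u a t. (u,a)\<in>G}"
  have GG': "G \<subseteq> G'"
  proof
    fix p assume "p \<in> G"
    then obtain u a where "p = (u,a)" "(u,a)\<in>G" by (cases p) auto
    moreover have "p = (u + 0 *\<^sub>R x0, a + 0 * \<xi>)" using \<open>p = (u,a)\<close> by simp
    ultimately show "p \<in> G'" unfolding G'_def by blast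
  qed
  have "(x0, \<xi>) = (0 + 1 *\<^sub>R x0, 0 + 1 * \<xi>)" by simp
  hence "(x0, \<xi>) \<in> G'" unfolding G'_def using z by blast
  hence neq: "G' \<noteq> G" using x0 by force
  have ext: "ext_graph N V \<phi> G'"
    unfolding ext_graph_def
  proof (intro conjI allI impI ballI)
    fix x a b assume "(x,a)\<in>G'" "(x,b)\<in>G'"
    then obtain u1 a1 t1 u2 a2 t2 where h: "(u1,a1)\<in>G" "(u2,a2)\<in>G" "x = u1 + t1 *\<^sub>R x0"
      "a = a1 + t1 * \<xi>" "x = u2 + t2 *\<^sub>R x0" "b = a2 + t2 * \<xi>"
      unfolding G'_def by blast
    have d: "(u2 + (-1) *\<^sub>R u1, a2 + (-1) * a1) \<in> G" using add[OF h(2) sc[OF h(1)]] .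
    have t: "t1 = t2"
    proof (rule ccontr)
      assume ne: "t1 \<noteq> t2"
      have "(inverse (t1 - t2)) *\<^sub>R (u2 + (-1) *\<^sub>R u1) = x0"
      proof -
        have "u2 - u1 = (t1 - t2) *\<^sub>R x0" using h(3,5) by (simp add: algebra_simps)
        thus ?thesis using ne by simp
      qed
      thus False using sc[OF d] x0 by force
    qed
    hence "u1 = u2" using h by simp
    hence "a1 = a2" using fn1 h by blast
    thus "a = b" using h t by simp
  next
    show "(0,0) \<in> G'" using GG' z by blast
  next
    fix x a y b assume "(x,a)\<in>G'" "(y,b)\<in>G'"
    then obtain u1 a1 t1 u2 a2 t2 where h: "(u1,a1)\<in>G" "(u2,a2)\<in>G" "x = u1 + t1 *\<^sub>R x0"
      "a = a1 + t1 * \<xi>" "y = u2 + t2 *\<^sub>R x0" "b = a2 + t2 * \<xi>"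
      unfolding G'_def by blast
    have "x + y = (u1 + u2) + (t1 + t2) *\<^sub>R x0" "a + b = (a1 + a2) + (t1 + t2) * \<xi>"
      using h by (simp_all add: algebra_simps)
    thus "(x+y, a+b) \<in> G'" unfolding G'_def using add[OF h(1,2)] by blast
  next
    fix x a r assume "(x,a)\<in>G'"
    then obtain u1 a1 t1 where h: "(u1,a1)\<in>G" "x = u1 + t1 *\<^sub>R x0" "a = a1 + t1 * \<xi>"
      unfolding G'_def by blast
    have "r *\<^sub>R x = r *\<^sub>R u1 + (r * t1) *\<^sub>R x0" "r * a = r * a1 + (r * t1) * \<xi>"
      using h by (simp_all add: algebra_simps)
    thus "(r *\<^sub>R x, r * a) \<in> G'" unfolding G'_def using sc[OF h(1)] by blast
  next
    fix x a assume "(x,a)\<in>G'"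
    then obtain u a1 t where h: "(u,a1)\<in>G" "x = u + t *\<^sub>R x0" "a = a1 + t * \<xi>"
      unfolding G'_def by blast
    show "a \<le> N * norm x"
    proof (cases t "0::real" rule: linorder_cases)
      case equal thus ?thesis using h bd by simp
    next
      case greater
      have g: "(inverse t *\<^sub>R u, inverse t * a1) \<in> G" using sc[OF h(1)] .
      have "\<xi> \<le> N * norm (inverse t *\<^sub>R u + x0) - inverse t * a1" using hi[OF g] .
      hence "t * \<xi> \<le> t * (N * norm (inverse t *\<^sub>R u + x0) - inverse t * a1)"
        using greater by (simp add: mult_left_mono)
      also have "\<dots> = N * (t * norm (inverse t *\<^sub>R u + x0)) - a1"
        using greater by (simp add: algebra_simps)
      also have "t * norm (inverse t *\<^sub>R u + x0) = norm (t *\<^sub>R (inverse t *\<^sub>R u + x0))"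
        using greater by simp
      also have "t *\<^sub>R (inverse t *\<^sub>R u + x0) = x"
        using greater h(2) by (simp add: algebra_simps)
      finally show ?thesis using h(3) by simp
    next
      case less
      define s where "s = - t"
      have s: "s > 0" using less s_def by simp
      have g: "(inverse s *\<^sub>R u, inverse s * a1) \<in> G" using sc[OF h(1)] .
      have "inverse s * a1 - N * norm (inverse s *\<^sub>R u - x0) \<le> \<xi>" using lo[OF g] .
      hence "s * (inverse s * a1 - N * norm (inverse s *\<^sub>R u - x0)) \<le> s * \<xi>"
        using s by (simp add: mult_left_mono)
      hence "a1 - N * (s * norm (inverse s *\<^sub>R u - x0)) \<le> s * \<xi>"
        using s by (simp add: algebra_simps)
      also have "s * norm (inverse s *\<^sub>R u - x0) = norm (s *\<^sub>R (inverse s *\<^sub>R u - x0))"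
        using s by simp
      also have "s *\<^sub>R (inverse s *\<^sub>R u - x0) = x"
        using s h(2) s_def by (simp add: algebra_simps)
      finally show ?thesis using h(3) s_def by simp
    qed
  next
    fix x assume "x \<in> V" thus "(x, \<phi> x) \<in> G'" using V GG' by blast
  qed
  show ?thesis using ext GG' neq by blast
qed

lemma hahn_banach_norm:
  fixes V :: "'a::real_normed_vector set" and \<phi> :: "'a \<Rightarrow> real"
  assumes N: "N \<ge> 0" and sub: "subspace V"
    and addV: "\<And>x y. x\<in>V \<Longrightarrow> y\<in>V \<Longrightarrow> \<phi> (x+y) = \<phi> x + \<phi> y"
    and scV: "\<And>x r. x\<in>V \<Longrightarrow> \<phi> (r *\<^sub>R x) = r * \<phi> x"
    and bdV: "\<And>x. x\<in>V \<Longrightarrow> \<phi> x \<le> N * norm x"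
  shows "\<exists>h. linear h \<and> (\<forall>x\<in>V. h x = \<phi> x) \<and> (\<forall>x. h x \<le> N * norm x)"
proof -
  define A where "A = {G. ext_graph N V \<phi> G}"
  define G0 where "G0 = (\<lambda>x. (x, \<phi> x)) ` V"
  have G0: "ext_graph N V \<phi> G0"
    unfolding ext_graph_def G0_def
  proof (intro conjI allI impI ballI)
    show "(0,0) \<in> (\<lambda>x. (x, \<phi> x)) ` V"
      using sub subspace_0[OF sub] scV[of 0 0] by (auto intro!: image_eqI[of _ _ 0])
  next
    fix x a y b assume "(x,a)\<in>(\<lambda>x. (x, \<phi> x)) ` V" "(y,b)\<in>(\<lambda>x. (x, \<phi> x)) ` V"
    thus "(x+y, a+b) \<in> (\<lambda>x. (x, \<phi> x)) ` V" using addV subspace_add[OF sub] by auto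
  next
    fix x a r assume "(x,a)\<in>(\<lambda>x. (x, \<phi> x)) ` V"
    thus "(r *\<^sub>R x, r*a) \<in> (\<lambda>x. (x, \<phi> x)) ` V" using scV subspace_scale[OF sub] by auto
  qed (use bdV in auto)
  have "\<exists>M\<in>A. \<forall>X\<in>A. M \<subseteq> X \<longrightarrow> X = M"
  proof (rule Zorn_Lemma2, intro ballI)
    fix C assume C: "C \<in> chains A"
    show "\<exists>U\<in>A. \<forall>X\<in>C. X \<subseteq> U"
    proof (cases "C = {}")
      case True thus ?thesis using G0 A_def by blast
    next
      case False
      have CA: "\<And>X. X \<in> C \<Longrightarrow> ext_graph N V \<phi> X" using chainsD2[OF C] A_def by blast
      have ch: "\<And>X Y. X\<in>C \<Longrightarrow> Y\<in>C \<Longrightarrow> X \<subseteq> Y \<or> Y \<subseteq> X" using chainsD[OF C] by blast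
      have "ext_graph N V \<phi> (\<Union>C)"
        unfolding ext_graph_def
      proof (intro conjI allI impI ballI)
        fix x a b assume "(x,a)\<in>\<Union>C" "(x,b)\<in>\<Union>C"
        then obtain X Y where XY: "X\<in>C" "Y\<in>C" "(x,a)\<in>X" "(x,b)\<in>Y" by blast
        show "a = b"
        proof (cases "X \<subseteq> Y")
          case True thus ?thesis using XY egD(1)[OF CA[of Y]] by blast
        next
          case False hence "Y \<subseteq> X" using ch XY by blast
          thus ?thesis using XY egD(1)[OF CA[of X]] by blast
        qed
      next
        obtain X where "X \<in> C" using False by blast
        thus "(0,0)\<in>\<Union>C" using egD(2)[OF CA] by blast
      next
        fix x a y b assume "(x,a)\<in>\<Union>C" "(y,b)\<in>\<Union>C"
        then obtain X Y where XY: "X\<in>C" "Y\<in>C" "(x,a)\<in>X" "(y,b)\<in>Y" by blast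
        show "(x+y,a+b)\<in>\<Union>C"
        proof (cases "X \<subseteq> Y")
          case True thus ?thesis using XY egD(3)[OF CA[of Y]] by blast
        next
          case False hence "Y \<subseteq> X" using ch XY by blast
          thus ?thesis using XY egD(3)[OF CA[of X]] by blast
        qed
      next
        fix x a r assume "(x,a)\<in>\<Union>C"
        then obtain X where "X\<in>C" "(x,a)\<in>X" by blast
        thus "(r *\<^sub>R x, r*a)\<in>\<Union>C" using egD(4)[OF CA] by blast
      next
        fix x a assume "(x,a)\<in>\<Union>C"
        then obtain X where "X\<in>C" "(x,a)\<in>X" by blast
        thus "a \<le> N * norm x" using egD(5)[OF CA] by blast
      next
        fix x assume "x \<in> V"
        obtain X where "X \<in> C" using False by blast
        thus "(x, \<phi> x)\<in>\<Union>C" using egD(6)[OF CA] \<open>x\<in>V\<close> by blast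
      qed
      thus ?thesis using A_def by blast
    qed
  qed
  then obtain M where MA: "ext_graph N V \<phi> M" and max: "\<And>X. ext_graph N V \<phi> X \<Longrightarrow> M \<subseteq> X \<Longrightarrow> X = M"
    using A_def by blast
  have dom: "\<And>x. x \<in> fst ` M"
  proof (rule ccontr)
    fix x assume "x \<notin> fst ` M"
    from ext_step[OF MA N this] max show False by blast
  qed
  have fn1: "\<And>x a b. (x,a)\<in>M \<Longrightarrow> (x,b)\<in>M \<Longrightarrow> a=b"
    and add: "\<And>x a y b. (x,a)\<in>M \<Longrightarrow> (y,b)\<in>M \<Longrightarrow> (x+y,a+b)\<in>M"
    and sc: "\<And>x a r. (x,a)\<in>M \<Longrightarrow> (r *\<^sub>R x, r*a)\<in>M"
    and bd: "\<And>x a. (x,a)\<in>M \<Longrightarrow> a \<le> N * norm x"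
    and Vm: "\<And>x. x\<in>V \<Longrightarrow> (x, \<phi> x)\<in>M"
    using egD[OF MA] by blast+
  define h where "h x = (SOME a. (x,a)\<in>M)" for x
  have hM: "(x, h x) \<in> M" for x
    unfolding h_def using dom[of x] by (auto intro: someI)
  have heq: "(x,a) \<in> M \<Longrightarrow> h x = a" for x a using fn1 hM by blast
  have "linear h"
    by (rule linearI) (auto intro!: heq add sc hM)
  moreover have "\<forall>x\<in>V. h x = \<phi> x" using heq Vm by blast
  moreover have "\<forall>x. h x \<le> N * norm x" using bd hM by blast
  ultimately show ?thesis by blast
qed

lemma coord_cont: "continuous_on S (\<lambda>c::nat\<Rightarrow>real. c j)"
  by (rule continuous_on_subset[OF continuous_on_product_coordinates]) simp

lemma compact_box:
  fixes R :: real
  shows "compact (PiE UNIV (\<lambda>j::nat. if j \<in> {1..m} then {-R..R} else {0::real}))"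
proof -
  have "compactin (product_topology (\<lambda>i. euclidean) UNIV)
          (PiE UNIV (\<lambda>j::nat. if j \<in> {1..m} then {-R..R} else {0::real}))"
    by (subst compactin_PiE) auto
  thus ?thesis by (simp add: euclidean_product_topology)
qed

lemma adjL_cont: "continuous_on S (\<lambda>c. norm (adjL m \<nu> c))"
  unfolding adjL_def by (intro continuous_on_norm continuous_on_sum continuous_on_scaleR coord_cont continuous_on_const)

lemma coercive:
  fixes \<nu> :: "nat \<Rightarrow> 'p::real_normed_vector"
  assumes lin_indep: "\<And>c. (\<Sum>j\<in>{1..m}. c j *\<^sub>R \<nu> j) = 0 \<Longrightarrow> \<forall>j\<in>{1..m}. c j = 0"
    and m: "m \<ge> 1"
  shows "\<exists>\<alpha>>0. \<forall>c. \<alpha> * (\<Sum>j\<in>{1..m}. \<bar>c j\<bar>) \<le> norm (adjL m \<nu> c)"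
proof -
  define Q where "Q = PiE UNIV (\<lambda>j::nat. if j \<in> {1..m} then {-1..1} else {0::real})"
  define S1 where "S1 = Q \<inter> {c. (\<Sum>j\<in>{1..m}. \<bar>c j\<bar>) = 1}"
  have "compact Q" unfolding Q_def using compact_box[of m 1] by simp
  moreover have "closed {c::nat\<Rightarrow>real. (\<Sum>j\<in>{1..m}. \<bar>c j\<bar>) = 1}"
    by (rule closed_Collect_eq) (intro continuous_on_sum continuous_on_rabs coord_cont continuous_on_const)+
  ultimately have cS: "compact S1" unfolding S1_def by (rule compact_Int_closed)
  define e where "e = (\<lambda>j::nat. if j = 1 then 1 else (0::real))"
  have "e \<in> S1" unfolding S1_def Q_def e_def using m
    by (auto simp: PiE_iff if_distrib cong: if_cong)
  hence ne: "S1 \<noteq> {}" by blast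
  obtain c1 where c1: "c1 \<in> S1" and min: "\<And>c. c \<in> S1 \<Longrightarrow> norm (adjL m \<nu> c1) \<le> norm (adjL m \<nu> c)"
    using continuous_attains_inf[OF cS ne adjL_cont] by blast
  have pos: "norm (adjL m \<nu> c1) > 0"
  proof (rule ccontr)
    assume "\<not> ?thesis"
    hence "adjL m \<nu> c1 = 0" by simp
    hence "\<forall>j\<in>{1..m}. c1 j = 0" using lin_indep unfolding adjL_def by blast
    hence "(\<Sum>j\<in>{1..m}. \<bar>c1 j\<bar>) = 0" by simp
    thus False using c1 unfolding S1_def by simp
  qed
  have "norm (adjL m \<nu> c1) * (\<Sum>j\<in>{1..m}. \<bar>c j\<bar>) \<le> norm (adjL m \<nu> c)" for c
  proof (cases "(\<Sum>j\<in>{1..m}. \<bar>c j\<bar>) = 0")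
    case True thus ?thesis by simp
  next
    case False
    define s where "s = (\<Sum>j\<in>{1..m}. \<bar>c j\<bar>)"
    have s: "s > 0" using False s_def by (simp add: sum_nonneg order_le_neq_trans)
    define c' where "c' = (\<lambda>j. if j \<in> {1..m} then c j / s else 0)"
    have le: "\<bar>c j\<bar> \<le> s" if "j \<in> {1..m}" for j
      unfolding s_def using that by (intro member_le_sum) auto
    have le2: "- s \<le> c j \<and> c j \<le> s" if "j \<in> {1..m}" for j using le[OF that] by auto
    have "c' \<in> Q" unfolding Q_def c'_def using le2 s
      by (auto simp: PiE_iff divide_le_eq le_divide_eq)
    moreover have "(\<Sum>j\<in>{1..m}. \<bar>c' j\<bar>) = 1"
    proof -
      have "(\<Sum>j\<in>{1..m}. \<bar>c' j\<bar>) = (\<Sum>j\<in>{1..m}. \<bar>c j\<bar> / s)"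
        unfolding c'_def using s by (intro sum.cong) auto
      also have "\<dots> = s / s" by (simp only: s_def sum_divide_distrib)
      finally show ?thesis using s by simp
    qed
    ultimately have "c' \<in> S1" unfolding S1_def by simp
    hence "norm (adjL m \<nu> c1) \<le> norm (adjL m \<nu> c')" by (rule min)
    also have "adjL m \<nu> c' = (1/s) *\<^sub>R adjL m \<nu> c"
      unfolding adjL_def c'_def scaleR_sum_right by (intro sum.cong) auto
    also have "norm \<dots> = norm (adjL m \<nu> c) / s" using s by simp
    finally show ?thesis using s by (simp add: s_def pos_le_divide_eq mult.commute)
  qed
  thus ?thesis using pos by blast
qed

lemma dual_exists:
  fixes \<nu> :: "nat \<Rightarrow> 'p::real_normed_vector" and y :: "nat \<Rightarrow> real"
  assumes lin_indep: "\<And>c. (\<Sum>j\<in>{1..m}. c j *\<^sub>R \<nu> j) = 0 \<Longrightarrow> \<forall>j\<in>{1..m}. c j = 0"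
    and y_nonzero: "\<exists>j\<in>{1..m}. y j \<noteq> 0"
  shows "\<exists>c. is_dual_solution m \<nu> y c"
proof -
  obtain j0 where j0: "j0 \<in> {1..m}" "y j0 \<noteq> 0" using y_nonzero by blast
  hence m: "m \<ge> 1" by simp
  obtain \<alpha> where \<alpha>: "\<alpha> > 0" and co: "\<And>c. \<alpha> * (\<Sum>j\<in>{1..m}. \<bar>c j\<bar>) \<le> norm (adjL m \<nu> c)"
    using coercive[OF lin_indep m] by blast
  define c0 where "c0 = (\<lambda>j. if j = j0 then 1 / y j0 else 0)"
  have c0y: "(\<Sum>j\<in>{1..m}. c0 j * y j) = 1"
  proof -
    have "(\<Sum>j\<in>{1..m}. c0 j * y j) = (\<Sum>j\<in>{1..m}. if j = j0 then 1 else 0)"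
      by (rule sum.cong) (auto simp: c0_def j0)
    also have "\<dots> = 1" using j0 by simp
    finally show ?thesis .
  qed
  define R where "R = norm (adjL m \<nu> c0) / \<alpha>"
  have sR: "(\<Sum>j\<in>{1..m}. \<bar>c0 j\<bar>) \<le> R"
    unfolding R_def using co[of c0] \<alpha> by (simp add: le_divide_eq mult.commute)
  define Q where "Q = PiE UNIV (\<lambda>j::nat. if j \<in> {1..m} then {-R..R} else {0::real}) \<inter>
     {c. (\<Sum>j\<in>{1..m}. c j * y j) = 1}"
  have "closed {c::nat\<Rightarrow>real. (\<Sum>j\<in>{1..m}. c j * y j) = 1}"
    by (rule closed_Collect_eq) (intro continuous_on_sum continuous_on_mult coord_cont continuous_on_const)+
  hence cQ: "compact Q" unfolding Q_def using compact_box[of m R] by (intro compact_Int_closed)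
  define r where "r c = (\<lambda>j. if j \<in> {1..m} then c j else (0::real))" for c :: "nat \<Rightarrow> real"
  have r_adj: "adjL m \<nu> (r c) = adjL m \<nu> c" for c
    unfolding adjL_def r_def by (intro sum.cong) auto
  have r_y: "(\<Sum>j\<in>{1..m}. r c j * y j) = (\<Sum>j\<in>{1..m}. c j * y j)" for c
    unfolding r_def by (intro sum.cong) auto
  have r_abs: "(\<Sum>j\<in>{1..m}. \<bar>r c j\<bar>) = (\<Sum>j\<in>{1..m}. \<bar>c j\<bar>)" for c
    unfolding r_def by (intro sum.cong) auto
  have inQ: "r c \<in> Q" if "(\<Sum>j\<in>{1..m}. c j * y j) = 1" "(\<Sum>j\<in>{1..m}. \<bar>c j\<bar>) \<le> R" for c
  proof -
    have "\<bar>c j\<bar> \<le> R" if "j \<in> {1..m}" for j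
      using member_le_sum[of j "{1..m}" "\<lambda>j. \<bar>c j\<bar>"] that \<open>(\<Sum>j\<in>{1..m}. \<bar>c j\<bar>) \<le> R\<close> by auto
    hence "- R \<le> c j \<and> c j \<le> R" if "j \<in> {1..m}" for j using that by fastforce
    thus ?thesis unfolding Q_def using r_y[of c] that(1) by (auto simp: PiE_iff r_def)
  qed
  have "r c0 \<in> Q" using inQ[OF c0y sR] .
  hence ne: "Q \<noteq> {}" by blast
  obtain ch where ch: "ch \<in> Q" and min: "\<And>c. c \<in> Q \<Longrightarrow> norm (adjL m \<nu> ch) \<le> norm (adjL m \<nu> c)"
    using continuous_attains_inf[OF cQ ne adjL_cont] by blast
  have chy: "(\<Sum>j\<in>{1..m}. ch j * y j) = 1" using ch unfolding Q_def by blast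
  have glob: "norm (adjL m \<nu> ch) \<le> norm (adjL m \<nu> c)" if "(\<Sum>j\<in>{1..m}. c j * y j) = 1" for c
  proof (cases "(\<Sum>j\<in>{1..m}. \<bar>c j\<bar>) \<le> R")
    case True
    thus ?thesis using min[OF inQ[OF that True]] r_adj by simp
  next
    case False
    have "norm (adjL m \<nu> ch) \<le> norm (adjL m \<nu> (r c0))" using min \<open>r c0 \<in> Q\<close> by blast
    also have "\<dots> = \<alpha> * R" unfolding R_def using \<alpha> r_adj by simp
    also have "\<dots> \<le> \<alpha> * (\<Sum>j\<in>{1..m}. \<bar>c j\<bar>)" using False \<alpha> by simp
    also have "\<dots> \<le> norm (adjL m \<nu> c)" by (rule co)
    finally show ?thesis .
  qed
  have "norm (adjL m \<nu> ch) = Inf {norm (adjL m \<nu> c') | c'. (\<Sum>j\<in>{1..m}. c' j * y j) = 1}"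
    by (rule cInf_eq_minimum[symmetric]) (use chy glob in auto)
  thus ?thesis unfolding is_dual_solution_def using chy by blast
qed

lemma interp_apply:
  assumes "f \<in> interp_set m \<nu> y"
  shows "blinfun_apply f (adjL m \<nu> c) = (\<Sum>j\<in>{1..m}. c j * y j)"
  using assms unfolding adjL_def interp_set_def
  by (simp add: blinfun.sum_right blinfun.scaleR_right)

lemma adjL_nz:
  fixes \<nu> :: "nat \<Rightarrow> 'p::real_normed_vector"
  assumes lin_indep: "\<And>c. (\<Sum>j\<in>{1..m}. c j *\<^sub>R \<nu> j) = 0 \<Longrightarrow> \<forall>j\<in>{1..m}. c j = 0"
    and "(\<Sum>j\<in>{1..m}. c j * y j) = 1"
  shows "norm (adjL m \<nu> c) > 0"
proof (rule ccontr)
  assume "\<not> ?thesis"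
  hence "adjL m \<nu> c = 0" by simp
  hence "\<forall>j\<in>{1..m}. c j = 0" using lin_indep unfolding adjL_def by blast
  hence "(\<Sum>j\<in>{1..m}. c j * y j) = 0" by simp
  thus False using assms(2) by simp
qed

lemma subdiff_norm_le:
  assumes "\<mu> \<in> subdiff norm x"
  shows "norm \<mu> \<le> 1"
proof (rule norm_blinfun_bound)
  fix w
  have a: "blinfun_apply \<mu> v \<le> norm v" for v
  proof -
    have "blinfun_apply \<mu> ((x + v) - x) \<le> norm (x + v) - norm x"
      using assms unfolding subdiff_def by blast
    moreover have "norm (x + v) \<le> norm x + norm v" by (rule norm_triangle_ineq)
    ultimately show ?thesis by simp
  qed
  have "- blinfun_apply \<mu> w \<le> norm w" using a[of "-w"] by (simp add: blinfun.minus_right)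
  thus "norm (blinfun_apply \<mu> w) \<le> 1 * norm w" using a[of w] by simp
qed simp

theorem mainTheorem11:
  fixes m :: nat and \<nu> :: "nat \<Rightarrow> 'p::real_normed_vector" and y :: "nat \<Rightarrow> real"
  assumes lin_indep: "\<And>c. (\<Sum>j\<in>{1..m}. c j *\<^sub>R \<nu> j) = 0 \<Longrightarrow> \<forall>j\<in>{1..m}. c j = 0"
    and y_nonzero: "\<exists>j\<in>{1..m}. y j \<noteq> 0"
  shows "(\<forall>f. is_mni_solution m \<nu> y f \<longrightarrow>
            (\<exists>c. is_dual_solution m \<nu> y c \<and>
                 f \<in> ((\<lambda>\<mu>. (1 / norm (adjL m \<nu> c)) *\<^sub>R \<mu>) ` subdiff norm (adjL m \<nu> c))
                      \<inter> interp_set m \<nu> y))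
       \<and> (\<forall>c f. is_dual_solution m \<nu> y c \<longrightarrow>
            f \<in> ((\<lambda>\<mu>. (1 / norm (adjL m \<nu> c)) *\<^sub>R \<mu>) ` subdiff norm (adjL m \<nu> c))
                 \<inter> interp_set m \<nu> y \<longrightarrow>
            is_mni_solution m \<nu> y f)"
proof (intro conjI allI impI)
  fix c f
  assume dc: "is_dual_solution m \<nu> y c"
    and fin: "f \<in> ((\<lambda>\<mu>. (1 / norm (adjL m \<nu> c)) *\<^sub>R \<mu>) ` subdiff norm (adjL m \<nu> c)) \<inter> interp_set m \<nu> y"
  have cy: "(\<Sum>j\<in>{1..m}. c j * y j) = 1" using dc unfolding is_dual_solution_def by blast
  define d where "d = norm (adjL m \<nu> c)"
  have d: "d > 0" unfolding d_def by (rule adjL_nz[OF lin_indep cy])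
  obtain \<mu> where mu: "\<mu> \<in> subdiff norm (adjL m \<nu> c)" and f: "f = (1/d) *\<^sub>R \<mu>"
    using fin d_def by blast
  have fI: "f \<in> interp_set m \<nu> y" using fin by blast
  have nf: "norm f \<le> 1 / d" using subdiff_norm_le[OF mu] d f by (simp add: divide_le_eq)
  have lb: "norm f \<le> norm g" if g: "g \<in> interp_set m \<nu> y" for g
  proof -
    have "1 = blinfun_apply g (adjL m \<nu> c)" using interp_apply[OF g] cy by simp
    also have "\<dots> \<le> norm g * d" unfolding d_def
      by (metis abs_le_D1 norm_blinfun real_norm_def order_trans)
    finally have "1 / d \<le> norm g" using d by (simp add: divide_le_eq)
    thus ?thesis using nf by simp
  qed
  have "Inf (norm ` interp_set m \<nu> y) = norm f"
    by (rule cInf_eq_minimum) (use fI lb in auto)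
  thus "is_mni_solution m \<nu> y f" unfolding is_mni_solution_def using fI by simp
next
  fix f assume mni: "is_mni_solution m \<nu> y f"
  have fI: "f \<in> interp_set m \<nu> y" and fInf: "norm f = Inf (norm ` interp_set m \<nu> y)"
    using mni unfolding is_mni_solution_def by blast+
  obtain c where dc: "is_dual_solution m \<nu> y c" using dual_exists[OF lin_indep y_nonzero] by blast
  have cy: "(\<Sum>j\<in>{1..m}. c j * y j) = 1"
    and cmin: "norm (adjL m \<nu> c) = Inf {norm (adjL m \<nu> c') | c'. (\<Sum>j\<in>{1..m}. c' j * y j) = 1}"
    using dc unfolding is_dual_solution_def by blast+
  define d where "d = norm (adjL m \<nu> c)"
  have d: "d > 0" unfolding d_def by (rule adjL_nz[OF lin_indep cy])
  have dle: "d \<le> norm (adjL m \<nu> c')" if "(\<Sum>j\<in>{1..m}. c' j * y j) = 1" for c'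
    unfolding d_def cmin by (rule cInf_lower) (use that in \<open>auto intro: bdd_belowI[of _ 0]\<close>)
  define V where "V = range (adjL m \<nu>)"
  have adj_add: "adjL m \<nu> (\<lambda>j. a j + b j) = adjL m \<nu> a + adjL m \<nu> b" for a b
    unfolding adjL_def by (simp add: scaleR_add_left sum.distrib)
  have adj_sc: "adjL m \<nu> (\<lambda>j. r * a j) = r *\<^sub>R adjL m \<nu> a" for a r
    unfolding adjL_def by (simp add: scaleR_sum_right)
  have adj_0: "adjL m \<nu> (\<lambda>j. 0) = 0" unfolding adjL_def by simp
  have subV: "subspace V" unfolding subspace_def V_def
  proof (intro conjI ballI allI)
    show "0 \<in> range (adjL m \<nu>)" using adj_0 by (metis rangeI)
  next
    fix x z assume "x \<in> range (adjL m \<nu>)" "z \<in> range (adjL m \<nu>)"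
    then obtain a b where "x = adjL m \<nu> a" "z = adjL m \<nu> b" by blast
    thus "x + z \<in> range (adjL m \<nu>)" using adj_add[of a b] by (metis rangeI)
  next
    fix r x assume "x \<in> range (adjL m \<nu>)"
    then obtain a where "x = adjL m \<nu> a" by blast
    thus "r *\<^sub>R x \<in> range (adjL m \<nu>)" using adj_sc[of r a] by (metis rangeI)
  qed
  have wd: "(\<Sum>j\<in>{1..m}. a j * y j) = (\<Sum>j\<in>{1..m}. b j * y j)" if "adjL m \<nu> a = adjL m \<nu> b" for a b
  proof -
    have "adjL m \<nu> (\<lambda>j. a j + (-1) * b j) = adjL m \<nu> a + (-1) *\<^sub>R adjL m \<nu> b"
      by (simp only: adj_add adj_sc)
    also have "\<dots> = 0" using that by simp
    finally have "adjL m \<nu> (\<lambda>j. a j + (-1) * b j) = 0" .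
    hence "\<forall>j\<in>{1..m}. a j + (-1) * b j = 0"
      using lin_indep[of "\<lambda>j. a j + (-1) * b j"] unfolding adjL_def by blast
    thus ?thesis by (intro sum.cong) auto
  qed
  define \<phi> where "\<phi> v = (\<Sum>j\<in>{1..m}. (SOME a. v = adjL m \<nu> a) j * y j)" for v
  have \<phi>: "\<phi> (adjL m \<nu> a) = (\<Sum>j\<in>{1..m}. a j * y j)" for a
  proof -
    have "adjL m \<nu> a = adjL m \<nu> (SOME a'. adjL m \<nu> a = adjL m \<nu> a')" by (rule someI[where x=a]) (rule refl)
    thus ?thesis unfolding \<phi>_def using wd by metis
  qed
  have "\<exists>h. linear h \<and> (\<forall>x\<in>V. h x = \<phi> x) \<and> (\<forall>x. h x \<le> (1/d) * norm x)"
  proof (rule hahn_banach_norm[OF _ subV])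
    show "0 \<le> 1/d" using d by simp
  next
    fix x z assume "x \<in> V" "z \<in> V"
    then obtain a b where "x = adjL m \<nu> a" "z = adjL m \<nu> b" unfolding V_def by blast
    thus "\<phi> (x + z) = \<phi> x + \<phi> z" using adj_add[of a b, symmetric] \<phi> by (simp add: sum.distrib distrib_right)
  next
    fix x r assume "x \<in> V"
    then obtain a where "x = adjL m \<nu> a" unfolding V_def by blast
    thus "\<phi> (r *\<^sub>R x) = r * \<phi> x" using adj_sc[of r a, symmetric] \<phi> by (simp add: sum_distrib_left mult.assoc)
  next
    fix x assume "x \<in> V"
    then obtain a where x: "x = adjL m \<nu> a" unfolding V_def by blast
    define s where "s = (\<Sum>j\<in>{1..m}. a j * y j)"
    show "\<phi> x \<le> 1 / d * norm x"
    proof (cases "s > 0")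
      case False
      have "0 \<le> 1/d * norm x" using d by simp
      moreover have "\<phi> x = s" using x \<phi> s_def by simp
      ultimately show ?thesis using False by linarith
    next
      case True
      have "(\<Sum>j\<in>{1..m}. (1/s * a j) * y j) = (1/s) * s"
        unfolding s_def sum_distrib_left by (simp add: mult.assoc)
      hence "(\<Sum>j\<in>{1..m}. (1/s * a j) * y j) = 1" using True by simp
      hence "d \<le> norm (adjL m \<nu> (\<lambda>j. (1/s) * a j))" by (rule dle)
      also have "\<dots> = norm ((1/s) *\<^sub>R x)" unfolding x by (simp only: adj_sc)
      also have "\<dots> = norm x / s" using True by simp
      finally have "s \<le> norm x / d" using True d by (simp add: le_divide_eq mult.commute)
      thus ?thesis using x \<phi> s_def by simp
    qed
  qed
  then obtain h where lh: "linear h" and hV: "\<forall>x\<in>V. h x = \<phi> x" and hb: "\<And>x. h x \<le> (1/d) * norm x"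
    by blast
  have hb2: "norm (h x) \<le> norm x * (1/d)" for x
  proof -
    have "- h x = h (-x)" using lh by (simp add: linear_neg)
    hence "- h x \<le> (1/d) * norm x" using hb[of "-x"] by simp
    thus ?thesis using hb[of x] by (simp add: mult.commute)
  qed
  have blh: "bounded_linear h"
    by (rule bounded_linear_intro[OF linear_add[OF lh] linear_scale[OF lh] hb2])
  define g where "g = Blinfun h"
  have gapp: "blinfun_apply g = h" unfolding g_def using blh by (simp add: bounded_linear_Blinfun_apply)
  have gI: "g \<in> interp_set m \<nu> y"
    unfolding interp_set_def
  proof (intro CollectI ballI)
    fix j assume j: "j \<in> {1..m}"
    define e where "e = (\<lambda>i. if i = j then 1 else (0::real))"
    have "adjL m \<nu> e = \<nu> j"
    proof -
      have "adjL m \<nu> e = (\<Sum>i\<in>{1..m}. if i = j then \<nu> j else 0)"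
        unfolding adjL_def e_def by (rule sum.cong) auto
      also have "\<dots> = \<nu> j" using j by simp
      finally show ?thesis .
    qed
    moreover have "(\<Sum>i\<in>{1..m}. e i * y i) = y j"
    proof -
      have "(\<Sum>i\<in>{1..m}. e i * y i) = (\<Sum>i\<in>{1..m}. if i = j then y j else 0)"
        unfolding e_def by (rule sum.cong) auto
      also have "\<dots> = y j" using j by simp
      finally show ?thesis .
    qed
    ultimately show "blinfun_apply g (\<nu> j) = y j"
      using gapp hV \<phi>[of e] unfolding V_def by (metis rangeI)
  qed
  have ng: "norm g \<le> 1/d"
    by (rule norm_blinfun_bound) (use d gapp hb2 in \<open>auto simp: mult.commute\<close>)
  have "norm f \<le> norm g" unfolding fInf
    by (rule cInf_lower) (use gI in \<open>auto intro: bdd_belowI[of _ 0]\<close>)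
  hence nf: "norm f \<le> 1/d" using ng by simp
  define \<mu> where "\<mu> = d *\<^sub>R f"
  have fx: "blinfun_apply f (adjL m \<nu> c) = 1" using interp_apply[OF fI] cy by simp
  have "\<mu> \<in> subdiff norm (adjL m \<nu> c)"
    unfolding subdiff_def
  proof (intro CollectI allI)
    fix z
    have "blinfun_apply f z \<le> norm f * norm z"
      by (metis abs_le_D1 norm_blinfun real_norm_def order_trans)
    also have "\<dots> \<le> (1/d) * norm z" using mult_right_mono[OF nf norm_ge_zero[of z]] .
    finally have "d * blinfun_apply f z \<le> norm z" using d by (simp add: le_divide_eq mult.commute)
    thus "blinfun_apply \<mu> (z - adjL m \<nu> c) \<le> norm z - norm (adjL m \<nu> c)"
      unfolding \<mu>_def using fx d_def by (simp add: blinfun.diff_right blinfun.scaleR_left algebra_simps)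
  qed
  moreover have "f = (1 / norm (adjL m \<nu> c)) *\<^sub>R \<mu>" unfolding \<mu>_def using d d_def by simp
  ultimately show "\<exists>c. is_dual_solution m \<nu> y c \<and>
                 f \<in> ((\<lambda>\<mu>. (1 / norm (adjL m \<nu> c)) *\<^sub>R \<mu>) ` subdiff norm (adjL m \<nu> c))
                      \<inter> interp_set m \<nu> y"
    using dc fI by blast
qed

end
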